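(* Let $P$ be a quasi-lattice ordered subsemigroup of a group $Q$ and $\Lambda$ an $(r,d)$-proper topological $P$-graph, with path space $\Omega$ and boundary path space $\partial\Omega$. Then (a) $\partial\Omega$ is a closed subset of $\Omega$; (b) if $A\in\partial\Omega$ and $n\in P$ with $A\cdot n\neq\emptyset$, then $A\cdot n\in\partial\Omega$; (c) if $B\in\partial\Omega$ and $\rho\in\Lambda$ satisfies $s(\rho)=r(B)$, then $\rho B\in\partial\Omega$.
   Context: Quasi-lattice ordered: $P\subset Q$ subsemigroup with $P\cap P^{-1}=\{e\}$ such that any two elements having a common upper bound (for $m\le n$ iff $n=mp$, $p\in P$) have a least upper bound. Topological $P$-graph: small category $\Lambda$, vertices $\Lambda^{(0)}\subset\Lambda$, $r,s:\Lambda\to\Lambda^{(0)}$, composition on composable pairs ($s(\lambda)=r(\mu)$); $\Lambda,\Lambda^{(0)}$ locally compact Hausdorff, $r,s$ continuous, $s$ a local homeomorphism, inclusion continuous, composition continuous and open; continuous $d:\Lambda\to P$ multiplicative, $e$ on vertices, with composition $\Lambda^m*\Lambda^n\to\Lambda^{mn}$ a homeomorphism. $(r,d)$-proper: $(r,d):\Lambda\to\Lambda^{(0)}\times P$ proper. $\mu\le\lambda$ iff $\lambda=\mu\nu$. $\Omega$: nonempty closed hereditary directed subsets of $\Lambda$ with the relative Fell topology; every $A\in\Omega$ is contained in $r^{-1}(x)$ for a unique vertex $x=:r(A)$. $A\cdot n=\{\nu:\exists\mu\in\Lambda^n,\mu\nu\in A\}$; $\rho B=\bigcup_{\nu\in B}\{\lambda:\lambda\le\rho\nu\}$.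 $E\subset\Lambda$ is exhaustive if for every $\lambda$ with $r(\lambda)\in r(E)$ there is $\mu\in E$ such that $\lambda,\mu$ have a common upper bound. For $A\in\Omega$, $\lambda\in A$ is extendable in $A$ if for every compact exhaustive $E$ with $r(E)$ a neighborhood of $s(\lambda)$ there is $\mu\in E$ with $\lambda\mu\in A$. $A$ is a boundary path if all its elements are extendable in $A$; $\partial\Omega$ is the set of boundary paths. *)

theory Defs
  imports "HOL-Analysis.Analysis"
begin

text \<open>The group Q is a type of class group_add (not necessarily commutative); the group
 operation is written additively, e is 0 and inverses are unary minus.\<close>

definition qle :: "'q::group_add set \<Rightarrow> 'q \<Rightarrow> 'q \<Rightarrow> bool" where
  "qle P m n \<longleftrightarrow> (\<exists>p\<in>P. n = m + p)"

definition quasi_lattice_ordered :: "'q::group_add set \<Rightarrow> bool" where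
  "quasi_lattice_ordered P \<longleftrightarrow>
     (\<forall>a\<in>P. \<forall>b\<in>P. a + b \<in> P) \<and>
     {x \<in> P. - x \<in> P} = {0} \<and>
     (\<forall>m\<in>P. \<forall>n\<in>P. (\<exists>k\<in>P. qle P m k \<and> qle P n k) \<longrightarrow>
        (\<exists>l\<in>P. qle P m l \<and> qle P n l \<and> (\<forall>k\<in>P. qle P m k \<and> qle P n k \<longrightarrow> qle P l k)))"

text \<open>Lambda = topspace T (with topology T); the vertex set V \<subseteq> Lambda carries its own topology TV
 (topspace TV = V).  Composition cmp x y (written x y in the paper) is only meaningful on
 composable pairs, i.e. s x = r y.\<close>

definition composable_pairs :: "('a \<Rightarrow> 'a) \<Rightarrow> ('a \<Rightarrow> 'a) \<Rightarrow> 'a set \<Rightarrow> ('a \<times> 'a) set" where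
  "composable_pairs r s L = {(x, y). x \<in> L \<and> y \<in> L \<and> s x = r y}"

definition local_homeomorphism :: "'a topology \<Rightarrow> 'b topology \<Rightarrow> ('a \<Rightarrow> 'b) \<Rightarrow> bool" where
  "local_homeomorphism X Y f \<longleftrightarrow>
     f ` topspace X \<subseteq> topspace Y \<and>
     (\<forall>x\<in>topspace X. \<exists>U. openin X U \<and> x \<in> U \<and> openin Y (f ` U) \<and>
        homeomorphic_map (subtopology X U) (subtopology Y (f ` U)) f)"

definition top_P_graph ::
  "'q::group_add set \<Rightarrow> 'a topology \<Rightarrow> 'a topology \<Rightarrow> ('a \<Rightarrow> 'a) \<Rightarrow> ('a \<Rightarrow> 'a)
     \<Rightarrow> ('a \<Rightarrow> 'a \<Rightarrow> 'a) \<Rightarrow> ('a \<Rightarrow> 'q) \<Rightarrow> bool" where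
  "top_P_graph P T TV r s cmp d \<longleftrightarrow>
     (let L = topspace T; V = topspace TV in
     \<comment> \<open>small category structure\<close>
     V \<subseteq> L \<and>
     (\<forall>x\<in>L. r x \<in> V \<and> s x \<in> V) \<and>
     (\<forall>v\<in>V. r v = v \<and> s v = v) \<and>
     (\<forall>x\<in>L. cmp (r x) x = x \<and> cmp x (s x) = x) \<and>
     (\<forall>x\<in>L. \<forall>y\<in>L. s x = r y \<longrightarrow> cmp x y \<in> L \<and> r (cmp x y) = r x \<and> s (cmp x y) = s y) \<and>
     (\<forall>x\<in>L. \<forall>y\<in>L. \<forall>z\<in>L. s x = r y \<longrightarrow> s y = r z \<longrightarrow> cmp (cmp x y) z = cmp x (cmp y z)) \<and>
     \<comment> \<open>topology\<close>
     locally_compact_space T \<and> Hausdorff_space T \<and>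
     locally_compact_space TV \<and> Hausdorff_space TV \<and>
     continuous_map T TV r \<and> continuous_map T TV s \<and>
     local_homeomorphism T TV s \<and>
     continuous_map TV T id \<and>
     continuous_map (subtopology (prod_topology T T) (composable_pairs r s L)) T (\<lambda>(x, y). cmp x y) \<and>
     open_map (subtopology (prod_topology T T) (composable_pairs r s L)) T (\<lambda>(x, y). cmp x y) \<and>
     \<comment> \<open>degree functor\<close>
     continuous_map T (discrete_topology P) d \<and>
     (\<forall>x\<in>L. \<forall>y\<in>L. s x = r y \<longrightarrow> d (cmp x y) = d x + d y) \<and>
     (\<forall>v\<in>V. d v = 0) \<and>
     \<comment> \<open>unique factorisation: composition Lambda^m * Lambda^n \<rightarrow> Lambda^(mn) is a homeomorphism\<close>
     (\<forall>m\<in>P. \<forall>n\<in>P.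
        homeomorphic_map
          (subtopology (prod_topology T T) {(x, y). (x, y) \<in> composable_pairs r s L \<and> d x = m \<and> d y = n})
          (subtopology T {z \<in> L. d z = m + n})
          (\<lambda>(x, y). cmp x y)))"

definition rd_proper ::
  "'q::group_add set \<Rightarrow> 'a topology \<Rightarrow> 'a topology \<Rightarrow> ('a \<Rightarrow> 'a) \<Rightarrow> ('a \<Rightarrow> 'q) \<Rightarrow> bool" where
  "rd_proper P T TV r d \<longleftrightarrow>
     continuous_map T (prod_topology TV (discrete_topology P)) (\<lambda>x. (r x, d x)) \<and>
     proper_map T (prod_topology TV (discrete_topology P)) (\<lambda>x. (r x, d x))"

definition path_le :: "'a set \<Rightarrow> ('a \<Rightarrow> 'a) \<Rightarrow> ('a \<Rightarrow> 'a) \<Rightarrow> ('a \<Rightarrow> 'a \<Rightarrow> 'a) \<Rightarrow> 'a \<Rightarrow> 'a \<Rightarrow> bool" where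
  "path_le L r s cmp mu lam \<longleftrightarrow> mu \<in> L \<and> lam \<in> L \<and> (\<exists>nu\<in>L. s mu = r nu \<and> lam = cmp mu nu)"

definition common_upper_bound ::
  "'a set \<Rightarrow> ('a \<Rightarrow> 'a) \<Rightarrow> ('a \<Rightarrow> 'a) \<Rightarrow> ('a \<Rightarrow> 'a \<Rightarrow> 'a) \<Rightarrow> 'a \<Rightarrow> 'a \<Rightarrow> 'a \<Rightarrow> bool" where
  "common_upper_bound L r s cmp x y z \<longleftrightarrow> path_le L r s cmp x z \<and> path_le L r s cmp y z"

definition Fell_topology :: "'a topology \<Rightarrow> 'a set topology" where
  "Fell_topology X = topology_generated_by
     ({{A. closedin X A \<and> A \<inter> K = {}} | K. compactin X K} \<union>
      {{A. closedin X A \<and> A \<inter> W \<noteq> {}} | W. openin X W})"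

definition path_space ::
  "'a topology \<Rightarrow> ('a \<Rightarrow> 'a) \<Rightarrow> ('a \<Rightarrow> 'a) \<Rightarrow> ('a \<Rightarrow> 'a \<Rightarrow> 'a) \<Rightarrow> 'a set set" where
  "path_space T r s cmp =
     {A. A \<noteq> {} \<and> closedin T A \<and>
         (\<forall>lam\<in>A. \<forall>mu. path_le (topspace T) r s cmp mu lam \<longrightarrow> mu \<in> A) \<and>
         (\<forall>x\<in>A. \<forall>y\<in>A. \<exists>z\<in>A. common_upper_bound (topspace T) r s cmp x y z)}"

definition path_space_topology ::
  "'a topology \<Rightarrow> ('a \<Rightarrow> 'a) \<Rightarrow> ('a \<Rightarrow> 'a) \<Rightarrow> ('a \<Rightarrow> 'a \<Rightarrow> 'a) \<Rightarrow> 'a set topology" where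
  "path_space_topology T r s cmp = subtopology (Fell_topology T) (path_space T r s cmp)"

definition range_vertex :: "'a set \<Rightarrow> ('a \<Rightarrow> 'a) \<Rightarrow> 'a set \<Rightarrow> 'a" where
  "range_vertex V r A = (THE x. x \<in> V \<and> (\<forall>lam\<in>A. r lam = x))"

definition shift_path ::
  "'a set \<Rightarrow> ('a \<Rightarrow> 'a) \<Rightarrow> ('a \<Rightarrow> 'a) \<Rightarrow> ('a \<Rightarrow> 'a \<Rightarrow> 'a) \<Rightarrow> ('a \<Rightarrow> 'q) \<Rightarrow> 'a set \<Rightarrow> 'q \<Rightarrow> 'a set" where
  "shift_path L r s cmp d A n = {nu \<in> L. \<exists>mu\<in>L. d mu = n \<and> s mu = r nu \<and> cmp mu nu \<in> A}"

definition prefix_path ::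
  "'a set \<Rightarrow> ('a \<Rightarrow> 'a) \<Rightarrow> ('a \<Rightarrow> 'a) \<Rightarrow> ('a \<Rightarrow> 'a \<Rightarrow> 'a) \<Rightarrow> 'a \<Rightarrow> 'a set \<Rightarrow> 'a set" where
  "prefix_path L r s cmp rho B = (\<Union>nu\<in>B. {lam. path_le L r s cmp lam (cmp rho nu)})"

definition exhaustive ::
  "'a set \<Rightarrow> ('a \<Rightarrow> 'a) \<Rightarrow> ('a \<Rightarrow> 'a) \<Rightarrow> ('a \<Rightarrow> 'a \<Rightarrow> 'a) \<Rightarrow> 'a set \<Rightarrow> bool" where
  "exhaustive L r s cmp E \<longleftrightarrow> E \<subseteq> L \<and>
     (\<forall>lam\<in>L. r lam \<in> r ` E \<longrightarrow> (\<exists>mu\<in>E. \<exists>z. common_upper_bound L r s cmp lam mu z))"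

definition extendable ::
  "'a topology \<Rightarrow> 'a topology \<Rightarrow> ('a \<Rightarrow> 'a) \<Rightarrow> ('a \<Rightarrow> 'a) \<Rightarrow> ('a \<Rightarrow> 'a \<Rightarrow> 'a) \<Rightarrow> 'a set \<Rightarrow> 'a \<Rightarrow> bool" where
  "extendable T TV r s cmp A lam \<longleftrightarrow> lam \<in> A \<and>
     (\<forall>E. compactin T E \<and> exhaustive (topspace T) r s cmp E \<and>
          (\<exists>U. openin TV U \<and> s lam \<in> U \<and> U \<subseteq> r ` E) \<longrightarrow>
          (\<exists>mu\<in>E. s lam = r mu \<and> cmp lam mu \<in> A))"

definition boundary_path_space ::
  "'a topology \<Rightarrow> 'a topology \<Rightarrow> ('a \<Rightarrow> 'a) \<Rightarrow> ('a \<Rightarrow> 'a) \<Rightarrow> ('a \<Rightarrow> 'a \<Rightarrow> 'a) \<Rightarrow> 'a set set" where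
  "boundary_path_space T TV r s cmp =
     {A \<in> path_space T r s cmp. \<forall>lam\<in>A. extendable T TV r s cmp A lam}"

end

theory Submission imports Defs begin

definition lubP :: "'q::group_add set \<Rightarrow> 'q \<Rightarrow> 'q \<Rightarrow> 'q" where
  "lubP P a b = (SOME l. l \<in> P \<and> qle P a l \<and> qle P b l \<and> (\<forall>k\<in>P. qle P a k \<and> qle P b k \<longrightarrow> qle P l k))"

locale PG =
  fixes P :: "'q::group_add set"
    and T TV :: "'a topology"
    and r s :: "'a \<Rightarrow> 'a"
    and cmp :: "'a \<Rightarrow> 'a \<Rightarrow> 'a"
    and d :: "'a \<Rightarrow> 'q"
  assumes qlo: "quasi_lattice_ordered P"
    and pg: "top_P_graph P T TV r s cmp d"
    and rdp: "rd_proper P T TV r d"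
begin

abbreviation "L \<equiv> topspace T"
abbreviation "V \<equiv> topspace TV"

lemma V_sub: "V \<subseteq> L" using pg unfolding top_P_graph_def Let_def by blast
lemma rV: "x \<in> L \<Longrightarrow> r x \<in> V" using pg unfolding top_P_graph_def Let_def by blast
lemma sV: "x \<in> L \<Longrightarrow> s x \<in> V" using pg unfolding top_P_graph_def Let_def by blast
lemma vert: "v \<in> V \<Longrightarrow> r v = v \<and> s v = v" using pg unfolding top_P_graph_def Let_def by blast
lemma unitl: "x \<in> L \<Longrightarrow> cmp (r x) x = x" using pg unfolding top_P_graph_def Let_def by blast
lemma unitr: "x \<in> L \<Longrightarrow> cmp x (s x) = x" using pg unfolding top_P_graph_def Let_def by blast
lemma cmpL: "x \<in> L \<Longrightarrow> y \<in> L \<Longrightarrow> s x = r y \<Longrightarrow> cmp x y \<in> L" using pg unfolding top_P_graph_def Let_def by blast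
lemma cmpr: "x \<in> L \<Longrightarrow> y \<in> L \<Longrightarrow> s x = r y \<Longrightarrow> r (cmp x y) = r x" using pg unfolding top_P_graph_def Let_def by blast
lemma cmps: "x \<in> L \<Longrightarrow> y \<in> L \<Longrightarrow> s x = r y \<Longrightarrow> s (cmp x y) = s y" using pg unfolding top_P_graph_def Let_def by blast
lemma assoc: "x \<in> L \<Longrightarrow> y \<in> L \<Longrightarrow> z \<in> L \<Longrightarrow> s x = r y \<Longrightarrow> s y = r z \<Longrightarrow> cmp (cmp x y) z = cmp x (cmp y z)"
  using pg unfolding top_P_graph_def Let_def by blast
lemma lcT: "locally_compact_space T" using pg unfolding top_P_graph_def Let_def by blast
lemma HT: "Hausdorff_space T" using pg unfolding top_P_graph_def Let_def by blast
lemma HTV: "Hausdorff_space TV" using pg unfolding top_P_graph_def Let_def by blast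
lemma rcont: "continuous_map T TV r" using pg unfolding top_P_graph_def Let_def by blast
lemma scont: "continuous_map T TV s" using pg unfolding top_P_graph_def Let_def by blast
lemma slh: "local_homeomorphism T TV s" using pg unfolding top_P_graph_def Let_def by blast
lemma cmpcont: "continuous_map (subtopology (prod_topology T T) (composable_pairs r s L)) T (\<lambda>(x, y). cmp x y)"
  using pg unfolding top_P_graph_def Let_def by blast
lemma dcont: "continuous_map T (discrete_topology P) d" using pg unfolding top_P_graph_def Let_def by blast
lemma dcmp: "x \<in> L \<Longrightarrow> y \<in> L \<Longrightarrow> s x = r y \<Longrightarrow> d (cmp x y) = d x + d y" using pg unfolding top_P_graph_def Let_def by blast
lemma dV: "v \<in> V \<Longrightarrow> d v = 0" using pg unfolding top_P_graph_def Let_def by blast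
lemma fact: "m \<in> P \<Longrightarrow> n \<in> P \<Longrightarrow> homeomorphic_map
          (subtopology (prod_topology T T) {(x, y). (x, y) \<in> composable_pairs r s L \<and> d x = m \<and> d y = n})
          (subtopology T {z \<in> L. d z = m + n})
          (\<lambda>(x, y). cmp x y)"
  using pg unfolding top_P_graph_def Let_def by blast

lemma dP: "x \<in> L \<Longrightarrow> d x \<in> P"
  using dcont unfolding continuous_map_def by auto

lemma Padd: "a \<in> P \<Longrightarrow> b \<in> P \<Longrightarrow> a + b \<in> P" using qlo unfolding quasi_lattice_ordered_def by blast

lemma fact_unique:
  assumes "x \<in> L" "y \<in> L" "x' \<in> L" "y' \<in> L" "s x = r y" "s x' = r y'" "d x = d x'"
    "cmp x y = cmp x' y'"
  shows "x = x' \<and> y = y'"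
proof -
  have "d (cmp x y) = d (cmp x' y')" using assms by simp
  hence "d x + d y = d x + d y'" using assms dcmp by metis
  hence dy: "d y = d y'" by simp
  have "inj_on (\<lambda>(x, y). cmp x y) (topspace (subtopology (prod_topology T T) {(x, y). (x, y) \<in> composable_pairs r s L \<and> d x = d x' \<and> d y = d y'}))"
    using homeomorphic_imp_injective_map[OF fact[OF dP dP]] assms by blast
  moreover have "(x,y) \<in> topspace (subtopology (prod_topology T T) {(x, y). (x, y) \<in> composable_pairs r s L \<and> d x = d x' \<and> d y = d y'})"
    "(x',y') \<in> topspace (subtopology (prod_topology T T) {(x, y). (x, y) \<in> composable_pairs r s L \<and> d x = d x' \<and> d y = d y'})"
    using assms dy unfolding composable_pairs_def by auto
  ultimately have "(x,y) = (x',y')" using assms(8) inj_onD[of "\<lambda>(x, y). cmp x y" _ "(x,y)" "(x',y')"] by auto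
  then show ?thesis by simp
qed

lemma fact_exists:
  assumes "z \<in> L" "m \<in> P" "n \<in> P" "d z = m + n"
  obtains x y where "x \<in> L" "y \<in> L" "s x = r y" "d x = m" "d y = n" "cmp x y = z"
proof -
  have "z \<in> topspace (subtopology T {z \<in> L. d z = m + n})" using assms by auto
  then obtain p where "p \<in> topspace (subtopology (prod_topology T T) {(x, y). (x, y) \<in> composable_pairs r s L \<and> d x = m \<and> d y = n})"
    "(\<lambda>(x, y). cmp x y) p = z"
    using homeomorphic_imp_surjective_map[OF fact[OF assms(2,3)]] by (metis (no_types, lifting) imageE)
  then show ?thesis using that unfolding composable_pairs_def by auto
qed

lemma ple_refl: "x \<in> L \<Longrightarrow> path_le L r s cmp x x"
  unfolding path_le_def using sV V_sub vert unitr by (metis subsetD)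

lemma ple_cmp: "x \<in> L \<Longrightarrow> y \<in> L \<Longrightarrow> s x = r y \<Longrightarrow> path_le L r s cmp x (cmp x y)"
  unfolding path_le_def using cmpL by blast

lemma ple_r: "path_le L r s cmp a b \<Longrightarrow> r a = r b"
  unfolding path_le_def using cmpr by auto

lemma ple_vert: "x \<in> L \<Longrightarrow> path_le L r s cmp (r x) x"
  unfolding path_le_def using rV V_sub vert unitl by (metis subsetD)

lemma ple_trans: "path_le L r s cmp a b \<Longrightarrow> path_le L r s cmp b c \<Longrightarrow> path_le L r s cmp a c"
proof -
  assume ab: "path_le L r s cmp a b" and bc: "path_le L r s cmp b c"
  then obtain u v where u: "u \<in> L" "s a = r u" "b = cmp a u" and v: "v \<in> L" "s b = r v" "c = cmp b v"
    and L: "a \<in> L" "b \<in> L" "c \<in> L" unfolding path_le_def by blast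
  have "s u = r v" using u v L cmps by metis
  hence "c = cmp a (cmp u v)" using assoc u v L by metis
  moreover have "cmp u v \<in> L" "r (cmp u v) = s a" using cmpL cmpr u v `s u = r v` by metis+
  ultimately show ?thesis unfolding path_le_def using L by metis
qed

lemma deg_unique:
  assumes "x \<in> L" "x' \<in> L" "d x = d x'" "common_upper_bound L r s cmp x x' z"
  shows "x = x'"
proof -
  obtain u u' where "u \<in> L" "s x = r u" "z = cmp x u" "u' \<in> L" "s x' = r u'" "z = cmp x' u'"
    using assms(4) unfolding common_upper_bound_def path_le_def by blast
  then show ?thesis using fact_unique assms by metis
qed

lemma deg_open: "openin T {x \<in> L. d x = n}"
proof -
  have "openin T {x \<in> L. d x \<in> {n} \<inter> P}"
    by (rule openin_continuous_map_preimage[OF dcont]) auto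
  moreover have "{x \<in> L. d x \<in> {n} \<inter> P} = {x \<in> L. d x = n}" using dP by auto
  ultimately show ?thesis by simp
qed

lemma directed_closed:
  assumes "S \<subseteq> L" "\<And>x y. x \<in> S \<Longrightarrow> y \<in> S \<Longrightarrow> \<exists>z. common_upper_bound L r s cmp x y z"
  shows "closedin T S"
proof -
  have t1: "t1_space T" using HT Hausdorff_imp_t1_space by blast
  have "openin T (L - S)"
  proof (subst openin_subopen, intro ballI)
    fix x assume x: "x \<in> L - S"
    define W where "W = {y \<in> L. d y = d x}"
    have cl: "closedin T (S \<inter> W)"
    proof (cases "\<exists>y0\<in>S. d y0 = d x")
      case True
      then obtain y0 where y0: "y0 \<in> S" "d y0 = d x" by blast
      have "S \<inter> W = {y0}"
      proof
        show "S \<inter> W \<subseteq> {y0}"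
        proof
          fix y assume "y \<in> S \<inter> W"
          then have "y \<in> S" "d y = d y0" using y0 W_def by auto
          then show "y \<in> {y0}" using deg_unique assms y0 by blast
        qed
        show "{y0} \<subseteq> S \<inter> W" using y0 assms W_def by auto
      qed
      then show ?thesis using t1 t1_space_closedin_singleton y0 assms by (metis subsetD)
    next
      case False
      then have "S \<inter> W = {}" using W_def by auto
      then show ?thesis by simp
    qed
    have "openin T (W - (S \<inter> W))" using openin_diff[OF _ cl] deg_open W_def by blast
    moreover have "x \<in> W - (S \<inter> W)" "W - (S \<inter> W) \<subseteq> L - S" using x W_def by auto
    ultimately show "\<exists>T'. openin T T' \<and> x \<in> T' \<and> T' \<subseteq> L - S" by blast
  qed
  then show ?thesis using assms(1) closedin_def by blast
qed

lemma pathI: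
  assumes "A \<noteq> {}" "A \<subseteq> L"
    "\<And>lam mu. lam \<in> A \<Longrightarrow> path_le L r s cmp mu lam \<Longrightarrow> mu \<in> A"
    "\<And>x y. x \<in> A \<Longrightarrow> y \<in> A \<Longrightarrow> \<exists>z\<in>A. common_upper_bound L r s cmp x y z"
  shows "A \<in> path_space T r s cmp"
proof -
  have "closedin T A"
  proof (rule directed_closed[OF assms(2)])
    fix x y assume "x \<in> A" "y \<in> A"
    then obtain z where "z \<in> A" "common_upper_bound L r s cmp x y z" using assms(4) by blast
    then show "\<exists>z. common_upper_bound L r s cmp x y z" by blast
  qed
  then show ?thesis unfolding path_space_def mem_Collect_eq using assms(1,3,4) by blast
qed

lemma path_sub: "A \<in> path_space T r s cmp \<Longrightarrow> A \<subseteq> L"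
  unfolding path_space_def using closedin_subset by auto

lemma path_her: "A \<in> path_space T r s cmp \<Longrightarrow> lam \<in> A \<Longrightarrow> path_le L r s cmp mu lam \<Longrightarrow> mu \<in> A"
  unfolding path_space_def by auto

lemma path_dir: "A \<in> path_space T r s cmp \<Longrightarrow> x \<in> A \<Longrightarrow> y \<in> A \<Longrightarrow> \<exists>z\<in>A. common_upper_bound L r s cmp x y z"
  unfolding path_space_def by auto

lemma shift_bd:
  assumes A: "A \<in> boundary_path_space T TV r s cmp" and m0: "mu0 \<in> L"
    and ne: "{nu \<in> L. s mu0 = r nu \<and> cmp mu0 nu \<in> A} \<noteq> {}"
  shows "{nu \<in> L. s mu0 = r nu \<and> cmp mu0 nu \<in> A} \<in> boundary_path_space T TV r s cmp"
proof -
  let ?S = "{nu \<in> L. s mu0 = r nu \<and> cmp mu0 nu \<in> A}"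
  have AP: "A \<in> path_space T r s cmp" using A unfolding boundary_path_space_def by blast
  have SP: "?S \<in> path_space T r s cmp"
  proof (rule pathI)
    show "?S \<noteq> {}" "?S \<subseteq> L" using ne by auto
  next
    fix lam mu assume lam: "lam \<in> ?S" and ml: "path_le L r s cmp mu lam"
    then obtain b where b: "b \<in> L" "s mu = r b" "lam = cmp mu b" "mu \<in> L" unfolding path_le_def by blast
    have rm: "r mu = s mu0" using ple_r[OF ml] lam by simp
    have "cmp mu0 lam = cmp (cmp mu0 mu) b" using assoc m0 b rm by metis
    moreover have "path_le L r s cmp (cmp mu0 mu) (cmp (cmp mu0 mu) b)"
      using ple_cmp cmpL cmps m0 b rm by metis
    ultimately have "cmp mu0 mu \<in> A" using path_her[OF AP] lam by auto
    then show "mu \<in> ?S" using b rm by auto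
  next
    fix x y assume x: "x \<in> ?S" and y: "y \<in> ?S"
    then obtain z where z: "z \<in> A" "common_upper_bound L r s cmp (cmp mu0 x) (cmp mu0 y) z"
      using path_dir[OF AP] by blast
    then obtain a b where a: "a \<in> L" "s (cmp mu0 x) = r a" "z = cmp (cmp mu0 x) a"
      and b: "b \<in> L" "s (cmp mu0 y) = r b" "z = cmp (cmp mu0 y) b"
      unfolding common_upper_bound_def path_le_def by blast
    have sa: "s x = r a" "s y = r b" using a b x y cmps m0 by auto
    have z1: "z = cmp mu0 (cmp x a)" using assoc a x m0 sa by auto
    have z2: "z = cmp mu0 (cmp y b)" using assoc b y m0 sa by auto
    have xa: "cmp x a \<in> L" "r (cmp x a) = s mu0" using cmpL cmpr x a sa by auto
    have yb: "cmp y b \<in> L" "r (cmp y b) = s mu0" using cmpL cmpr y b sa by auto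
    have eq: "cmp x a = cmp y b" using fact_unique[OF m0 xa(1) m0 yb(1)] xa yb z1 z2 by metis
    have "cmp x a \<in> ?S" using xa z1 z by auto
    moreover have "path_le L r s cmp x (cmp x a)" "path_le L r s cmp y (cmp y b)"
      using ple_cmp x y a b sa by auto
    moreover have "common_upper_bound L r s cmp x y (cmp x a)"
      unfolding common_upper_bound_def using calculation(2,3) eq by simp
    ultimately show "\<exists>z\<in>?S. common_upper_bound L r s cmp x y z" by blast
  qed
  have "extendable T TV r s cmp ?S lam" if lam: "lam \<in> ?S" for lam
  proof -
    have ext: "extendable T TV r s cmp A (cmp mu0 lam)" using A lam unfolding boundary_path_space_def by blast
    have sl: "s (cmp mu0 lam) = s lam" using cmps m0 lam by auto
    show ?thesis unfolding extendable_def
    proof (intro conjI lam allI impI)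
      fix E assume E: "compactin T E \<and> exhaustive L r s cmp E \<and> (\<exists>U. openin TV U \<and> s lam \<in> U \<and> U \<subseteq> r ` E)"
      then have "\<exists>mu\<in>E. s (cmp mu0 lam) = r mu \<and> cmp (cmp mu0 lam) mu \<in> A"
        using ext sl unfolding extendable_def by simp
      then obtain mu where mu: "mu \<in> E" "s lam = r mu" "cmp (cmp mu0 lam) mu \<in> A"
        using sl by auto
      have muL: "mu \<in> L" using E mu unfolding exhaustive_def by blast
      have "cmp (cmp mu0 lam) mu = cmp mu0 (cmp lam mu)" using assoc m0 lam muL mu by auto
      moreover have "cmp lam mu \<in> L" "r (cmp lam mu) = s mu0" using cmpL cmpr lam muL mu by auto
      ultimately show "\<exists>mu\<in>E. s lam = r mu \<and> cmp lam mu \<in> ?S" using mu by auto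
    qed
  qed
  then show ?thesis using SP unfolding boundary_path_space_def by blast
qed

lemma partb:
  assumes A: "A \<in> boundary_path_space T TV r s cmp" and n: "n \<in> P"
    and ne: "shift_path L r s cmp d A n \<noteq> {}"
  shows "shift_path L r s cmp d A n \<in> boundary_path_space T TV r s cmp"
proof -
  have AP: "A \<in> path_space T r s cmp" using A unfolding boundary_path_space_def by blast
  obtain nu0 mu0 where nm: "nu0 \<in> L" "mu0 \<in> L" "d mu0 = n" "s mu0 = r nu0" "cmp mu0 nu0 \<in> A"
    using ne unfolding shift_path_def by blast
  have m0A: "mu0 \<in> A" using path_her[OF AP nm(5)] ple_cmp nm by blast
  have eq: "shift_path L r s cmp d A n = {nu \<in> L. s mu0 = r nu \<and> cmp mu0 nu \<in> A}"
  proof (rule set_eqI, rule iffI)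
    fix nu assume "nu \<in> shift_path L r s cmp d A n"
    then obtain mu where mu: "nu \<in> L" "mu \<in> L" "d mu = n" "s mu = r nu" "cmp mu nu \<in> A"
      unfolding shift_path_def by blast
    have "mu \<in> A" using path_her[OF AP mu(5)] ple_cmp mu by blast
    then obtain z where "common_upper_bound L r s cmp mu mu0 z" using path_dir[OF AP _ m0A] by blast
    then have "mu = mu0" using deg_unique mu nm by metis
    then show "nu \<in> {nu \<in> L. s mu0 = r nu \<and> cmp mu0 nu \<in> A}" using mu by auto
  next
    fix nu assume "nu \<in> {nu \<in> L. s mu0 = r nu \<and> cmp mu0 nu \<in> A}"
    then show "nu \<in> shift_path L r s cmp d A n" unfolding shift_path_def using nm by blast
  qed
  show ?thesis unfolding eq by (rule shift_bd[OF A nm(2)]) (use nm in blast)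
qed

lemma nbhd_compact:
  assumes "openin T G" "x \<in> G"
  obtains U K where "openin T U" "compactin T K" "x \<in> U" "U \<subseteq> K" "K \<subseteq> G"
proof -
  have "regular_space T" using locally_compact_Hausdorff_imp_regular_space lcT HT by blast
  then have "neighbourhood_base_of (\<lambda>C. compactin T C \<and> closedin T C) T"
    using locally_compact_regular_space_neighbourhood_base lcT by blast
  then show ?thesis using assms that unfolding neighbourhood_base_of by blast
qed

lemma CP_closed: "closedin (prod_topology T T) (composable_pairs r s L)"
proof -
  have "closedin (prod_topology T T) {p \<in> topspace (prod_topology T T). (s \<circ> fst) p = (r \<circ> snd) p}"
    by (rule closedin_continuous_maps_eq[OF HTV]; rule continuous_map_compose[OF continuous_map_fst scont] continuous_map_compose[OF continuous_map_snd rcont])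
  moreover have "{p \<in> topspace (prod_topology T T). (s \<circ> fst) p = (r \<circ> snd) p} = composable_pairs r s L"
    unfolding composable_pairs_def by auto
  ultimately show ?thesis by simp
qed

lemma cmp_image_compact:
  assumes "compactin T K" "compactin T E"
  shows "compactin T ((\<lambda>(x,y). cmp x y) ` ((K \<times> E) \<inter> composable_pairs r s L))"
proof -
  have "compactin (prod_topology T T) ((K \<times> E) \<inter> composable_pairs r s L)"
    using compact_Int_closedin CP_closed assms compactin_Times by blast
  then have "compactin (subtopology (prod_topology T T) (composable_pairs r s L)) ((K \<times> E) \<inter> composable_pairs r s L)"
    using compactin_subtopology by blast
  then show ?thesis using image_compactin cmpcont by blast
qed

lemma parta: "closedin (path_space_topology T r s cmp) (boundary_path_space T TV r s cmp)"
proof -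
  let ?F = "Fell_topology T"
  let ?O = "path_space T r s cmp"
  let ?B = "boundary_path_space T TV r s cmp"
  let ?S = "{{A. closedin T A \<and> A \<inter> K = {}} | K. compactin T K} \<union>
      {{A. closedin T A \<and> A \<inter> W \<noteq> {}} | W. openin T W}"
  have F: "?F = topology_generated_by ?S" unfolding Fell_topology_def by (rule refl)
  have OF: "?O \<subseteq> topspace ?F"
  proof
    fix A assume "A \<in> ?O"
    then have "A \<in> {A. closedin T A \<and> A \<inter> {} = {}}" unfolding path_space_def by simp
    moreover have "{A. closedin T A \<and> A \<inter> {} = {}} \<in> ?S"
      by (rule UnI1, rule CollectI, rule exI[of _ "{}"]) simp
    ultimately show "A \<in> topspace ?F" unfolding F topology_generated_by_topspace by (rule UnionI[rotated])
  qed
  have top: "topspace (path_space_topology T r s cmp) = ?O"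
    unfolding path_space_topology_def using OF by (simp add: Int_absorb1)
  have BO: "?B \<subseteq> ?O" unfolding boundary_path_space_def by (rule Collect_restrict)
  have "openin (path_space_topology T r s cmp) (?O - ?B)"
  proof (subst openin_subopen, intro ballI)
    fix A assume A: "A \<in> ?O - ?B"
    then obtain lam where lam: "lam \<in> A" "\<not> extendable T TV r s cmp A lam"
      unfolding boundary_path_space_def by blast
    have AL: "A \<subseteq> L" using path_sub A by blast
    have "\<not> (\<forall>E. compactin T E \<and> exhaustive L r s cmp E \<and>
          (\<exists>U. openin TV U \<and> s lam \<in> U \<and> U \<subseteq> r ` E) \<longrightarrow>
          (\<exists>mu\<in>E. s lam = r mu \<and> cmp lam mu \<in> A))"
      using lam unfolding extendable_def by simp
    then obtain E where E: "compactin T E" "exhaustive L r s cmp E"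
        "\<exists>U. openin TV U \<and> s lam \<in> U \<and> U \<subseteq> r ` E"
        "\<not> (\<exists>mu\<in>E. s lam = r mu \<and> cmp lam mu \<in> A)"
      by blast
    obtain U where U: "openin TV U" "s lam \<in> U" "U \<subseteq> r ` E" using E(3) by blast
    define G where "G = {x \<in> L. d x = d lam} \<inter> {x \<in> L. s x \<in> U}"
    have Gop: "openin T G" unfolding G_def
      using deg_open openin_continuous_map_preimage[OF scont U(1)] by blast
    have lG: "lam \<in> G" using G_def lam AL U by auto
    obtain W K where WK: "openin T W" "compactin T K" "lam \<in> W" "W \<subseteq> K" "K \<subseteq> G"
      using nbhd_compact[OF Gop lG] by blast
    define K2 where "K2 = (\<lambda>(x,y). cmp x y) ` ((K \<times> E) \<inter> composable_pairs r s L)"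
    have K2c: "compactin T K2" unfolding K2_def using cmp_image_compact WK E by blast
    define N where "N = {C. closedin T C \<and> C \<inter> K2 = {}} \<inter> {C. closedin T C \<and> C \<inter> W \<noteq> {}}"
    have "openin ?F N" unfolding N_def F
    proof (rule openin_Int; rule topology_generated_by_Basis)
      show "{C. closedin T C \<and> C \<inter> K2 = {}} \<in> ?S" using K2c by blast
      show "{C. closedin T C \<and> C \<inter> W \<noteq> {}} \<in> ?S" using WK by blast
    qed
    then have Nop: "openin (path_space_topology T r s cmp) (N \<inter> ?O)"
      unfolding path_space_topology_def openin_subtopology by blast
    have "A \<inter> K2 = {}"
    proof (rule ccontr)
      assume "A \<inter> K2 \<noteq> {}"
      then obtain x mu where xm: "x \<in> K" "mu \<in> E" "(x,mu) \<in> composable_pairs r s L" "cmp x mu \<in> A"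
        unfolding K2_def by auto
      have xL: "x \<in> L" "mu \<in> L" "s x = r mu" using xm unfolding composable_pairs_def by auto
      have "x \<in> A" using path_her[OF _ xm(4)] A ple_cmp xL by blast
      then obtain z where "common_upper_bound L r s cmp x lam z" using path_dir A lam by blast
      moreover have "d x = d lam" using xm WK G_def by auto
      ultimately have "x = lam" using deg_unique xL AL lam by blast
      then show False using E(4) xm xL by blast
    qed
    moreover have "closedin T A" using A unfolding path_space_def by blast
    moreover have "A \<inter> W \<noteq> {}" using lam WK by blast
    ultimately have "A \<in> N \<inter> ?O" unfolding N_def using A by simp
    moreover have "N \<inter> ?O \<subseteq> ?O - ?B"
    proof
      fix C assume C: "C \<in> N \<inter> ?O"
      show "C \<in> ?O - ?B"
      proof (rule ccontr)
        assume "C \<notin> ?O - ?B"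
        then have CB: "C \<in> ?B" using C by blast
        obtain x where x: "x \<in> C" "x \<in> W" using C N_def by blast
        have ext: "extendable T TV r s cmp C x" using CB x unfolding boundary_path_space_def by blast
        have "s x \<in> U" using x WK G_def by auto
        then have "\<exists>U. openin TV U \<and> s x \<in> U \<and> U \<subseteq> r ` E" using U by blast
        then have "\<exists>mu\<in>E. s x = r mu \<and> cmp x mu \<in> C"
          using ext E(1,2) unfolding extendable_def by simp
        then obtain mu where mu: "mu \<in> E" "s x = r mu" "cmp x mu \<in> C" by blast
        have "x \<in> L" "mu \<in> L" using x WK G_def E(2) mu unfolding exhaustive_def by auto
        then have "(x,mu) \<in> (K \<times> E) \<inter> composable_pairs r s L" unfolding composable_pairs_def using x WK mu by auto
        then have "cmp x mu \<in> K2" unfolding K2_def by (metis (no_types, lifting) case_prod_conv image_eqI)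
        then show False using C mu N_def by blast
      qed
    qed
    ultimately show "\<exists>T'. openin (path_space_topology T r s cmp) T' \<and> A \<in> T' \<and> T' \<subseteq> ?O - ?B"
      using Nop by blast
  qed
  then show ?thesis unfolding closedin_def top using BO by blast
qed

lemma lubP:
  assumes "a \<in> P" "b \<in> P" "k \<in> P" "qle P a k" "qle P b k"
  shows "lubP P a b \<in> P \<and> qle P a (lubP P a b) \<and> qle P b (lubP P a b) \<and> qle P (lubP P a b) k"
proof -
  have "\<exists>l. l \<in> P \<and> qle P a l \<and> qle P b l \<and> (\<forall>k\<in>P. qle P a k \<and> qle P b k \<longrightarrow> qle P l k)"
    using qlo assms unfolding quasi_lattice_ordered_def by blast
  then have "lubP P a b \<in> P \<and> qle P a (lubP P a b) \<and> qle P b (lubP P a b) \<and> (\<forall>k\<in>P. qle P a k \<and> qle P b k \<longrightarrow> qle P (lubP P a b) k)"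
    unfolding lubP_def by (rule someI_ex)
  then show ?thesis using assms by blast
qed

lemma prefix_factor:
  assumes x: "x \<in> L" and w: "w \<in> L" and xw: "s x = r w" and m: "m \<in> P"
    and q1: "qle P (d x) m" and q2: "qle P m (d (cmp x w))"
  obtains w1 w2 where "w1 \<in> L" "w2 \<in> L" "s w1 = r w2" "w = cmp w1 w2"
    "d w1 = - d x + m" "d w2 = - m + d (cmp x w)"
proof -
  obtain q where q: "q \<in> P" "m = d x + q" using q1 unfolding qle_def by blast
  obtain p where p: "p \<in> P" "d (cmp x w) = m + p" using q2 unfolding qle_def by blast
  have "d x + d w = d x + (q + p)" using dcmp[OF x w xw] p q by (simp add: add.assoc)
  then have "d w = q + p" by simp
  then obtain w1 w2 where ww: "w1 \<in> L" "w2 \<in> L" "s w1 = r w2" "d w1 = q" "d w2 = p" "cmp w1 w2 = w"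
    using fact_exists[OF w q(1) p(1)] by blast
  have "- d x + m = q" using q by (simp add: add.assoc[symmetric])
  moreover have "- m + d (cmp x w) = p" using p by (simp add: add.assoc[symmetric])
  ultimately show ?thesis using that ww by simp
qed

lemma core:
  assumes g: "g \<in> L" and eta: "eta \<in> L" and mu: "mu \<in> L" and ge: "s g = r eta"
    and cub: "common_upper_bound L r s cmp (cmp g eta) mu z"
  obtains b a w where "b \<in> L" "a \<in> L" "s g = r b" "s mu = r a" "cmp g b = cmp mu a"
    "d b = - d g + lubP P (d g) (d mu)" "d a = - d mu + lubP P (d g) (d mu)"
    "common_upper_bound L r s cmp eta b w"
proof -
  have geL: "cmp g eta \<in> L" using cmpL g eta ge by blast
  obtain a1 where a1: "a1 \<in> L" "s (cmp g eta) = r a1" "z = cmp (cmp g eta) a1"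
    using cub unfolding common_upper_bound_def path_le_def by blast
  obtain a2 where a2: "a2 \<in> L" "s mu = r a2" "z = cmp mu a2"
    using cub unfolding common_upper_bound_def path_le_def by blast
  have ea: "s eta = r a1" using a1 cmps[OF g eta ge] by simp
  define w where "w = cmp eta a1"
  have wL: "w \<in> L" and rw: "r w = r eta" using w_def cmpL cmpr eta a1 ea by auto
  have gw: "s g = r w" using rw ge by simp
  have zw: "z = cmp g w" using w_def a1 assoc[OF g eta a1(1) ge ea] by simp
  have dz1: "d z = d g + d w" using zw dcmp[OF g wL gw] by simp
  have dz2: "d z = d mu + d a2" using a2 dcmp[OF mu a2(1) a2(2)] by simp
  let ?m = "lubP P (d g) (d mu)"
  have "qle P (d g) (d z)" unfolding qle_def using dz1 dP[OF wL] by blast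
  moreover have "qle P (d mu) (d z)" unfolding qle_def using dz2 dP[OF a2(1)] by blast
  ultimately
  have m: "?m \<in> P" "qle P (d g) ?m" "qle P (d mu) ?m" "qle P ?m (d z)"
    using lubP dP g mu cmpL[OF g wL gw] zw by metis+
  obtain w1 w2 where W: "w1 \<in> L" "w2 \<in> L" "s w1 = r w2" "w = cmp w1 w2"
    "d w1 = - d g + ?m" "d w2 = - ?m + d (cmp g w)"
    using prefix_factor[OF g wL gw m(1,2)] m(4) zw by metis
  obtain b1 b2 where Bb: "b1 \<in> L" "b2 \<in> L" "s b1 = r b2" "a2 = cmp b1 b2"
    "d b1 = - d mu + ?m" "d b2 = - ?m + d (cmp mu a2)"
    using prefix_factor[OF mu a2(1) a2(2) m(1,3)] m(4) a2 by metis
  have rw1: "r w1 = r w" using W cmpr by simp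
  have rb1: "r b1 = s mu" using Bb cmpr a2 by simp
  have gw1: "s g = r w1" using rw1 gw by simp
  have z1: "z = cmp (cmp g w1) w2" using zw W assoc[OF g W(1) W(2) gw1 W(3)] by simp
  have z2: "z = cmp (cmp mu b1) b2" using a2 Bb assoc[OF mu Bb(1) Bb(2) rb1[symmetric] Bb(3)] by simp
  have d1: "d (cmp g w1) = ?m" using dcmp[OF g W(1) gw1] W(5) by (simp add: add.assoc[symmetric])
  have d2: "d (cmp mu b1) = ?m" using dcmp[OF mu Bb(1) rb1[symmetric]] Bb(5) by (simp add: add.assoc[symmetric])
  have "cmp g w1 = cmp mu b1"
    using fact_unique[OF cmpL[OF g W(1) gw1] W(2) cmpL[OF mu Bb(1) rb1[symmetric]] Bb(2)] z1 z2 d1 d2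
      cmps[OF g W(1) gw1] cmps[OF mu Bb(1) rb1[symmetric]] W(3) Bb(3) by metis
  moreover have "common_upper_bound L r s cmp eta w1 w"
    unfolding common_upper_bound_def using ple_cmp[OF eta a1(1) ea] ple_cmp[OF W(1) W(2) W(3)] w_def W(4) by simp
  ultimately show ?thesis using that[of w1 b1 w] W(1,5) Bb(1,5) gw1 rb1 by simp
qed

lemma rdprop: "compactin (prod_topology TV (discrete_topology P)) K \<Longrightarrow> compactin T {x \<in> L. (r x, d x) \<in> K}"
  using rdp unfolding rd_proper_def proper_map_alt by blast

lemma prefix_ext:
  assumes A: "A \<in> path_space T r s cmp" and z: "zeta \<in> A" and ext: "extendable T TV r s cmp A zeta"
    and le: "path_le L r s cmp lam zeta"
  shows "extendable T TV r s cmp A lam"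
  unfolding extendable_def
proof (intro conjI allI impI)
  show lamA: "lam \<in> A" using path_her[OF A z le] .
  obtain gam where gam: "gam \<in> L" "s lam = r gam" "zeta = cmp lam gam" and lamL: "lam \<in> L"
    using le unfolding path_le_def by blast
  fix E assume EE: "compactin T E \<and> exhaustive L r s cmp E \<and> (\<exists>U. openin TV U \<and> s lam \<in> U \<and> U \<subseteq> r ` E)"
  then have Ec: "compactin T E" and Eex: "exhaustive L r s cmp E" by auto
  have EL: "E \<subseteq> L" using Eex unfolding exhaustive_def by blast
  obtain UE where UE: "openin TV UE" "s lam \<in> UE" "UE \<subseteq> r ` E" using EE by blast
  obtain U0 where U0: "openin T U0" "gam \<in> U0" "openin TV (s ` U0)"
    "homeomorphic_map (subtopology T U0) (subtopology TV (s ` U0)) s"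
    using slh gam(1) unfolding local_homeomorphism_def by blast
  obtain g where g: "homeomorphic_maps (subtopology T U0) (subtopology TV (s ` U0)) s g"
    using U0(4) homeomorphic_map_maps by blast
  have U0L: "U0 \<subseteq> L" using U0(1) openin_subset by blast
  have sU0V: "s ` U0 \<subseteq> V" using U0(3) openin_subset by blast
  have gcont: "continuous_map (subtopology TV (s ` U0)) (subtopology T U0) g"
    using g unfolding homeomorphic_maps_def by blast
  have gs: "g (s x) = x" if "x \<in> U0" for x
    using g that U0L unfolding homeomorphic_maps_def by auto
  define G where "G = U0 \<inter> {x \<in> L. d x = d gam} \<inter> {x \<in> L. r x \<in> UE}"
  have Gop: "openin T G" unfolding G_def
    using U0(1) deg_open openin_continuous_map_preimage[OF rcont UE(1)] by blast
  have gG: "gam \<in> G" unfolding G_def using U0 gam UE by auto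
  obtain U1 K where UK: "openin T U1" "compactin T K" "gam \<in> U1" "U1 \<subseteq> K" "K \<subseteq> G"
    using nbhd_compact[OF Gop gG] by blast
  have KU0: "K \<subseteq> U0" using UK G_def by blast
  have KL: "K \<subseteq> L" using KU0 U0L by blast
  have sU1: "openin TV (s ` U1)"
  proof -
    have "openin (subtopology T U0) U1" unfolding openin_subtopology using UK KU0 by blast
    then have "openin (subtopology TV (s ` U0)) (s ` U1)"
      using homeomorphic_imp_open_map[OF U0(4)] unfolding open_map_def by blast
    then show ?thesis using openin_trans_full U0(3) by blast
  qed
  have dEfin: "finite (d ` E)"
    using image_compactin[OF Ec dcont] compactin_discrete_topology by blast
  define D where "D = (\<lambda>p. - d gam + lubP P (d gam) p) ` (d ` E) \<inter> P"
  define Da where "Da = (\<lambda>p. - p + lubP P (d gam) p) ` (d ` E) \<inter> P"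
  have Dc: "compactin (discrete_topology P) D" unfolding D_def compactin_discrete_topology using dEfin by auto
  have Dac: "compactin (discrete_topology P) Da" unfolding Da_def compactin_discrete_topology using dEfin by auto
  define Ca where "Ca = {x \<in> L. (r x, d x) \<in> (s ` E) \<times> Da}"
  have Cac: "compactin T Ca" unfolding Ca_def
    by (rule rdprop) (use compactin_Times image_compactin[OF Ec scont] Dac in blast)
  define Z where "Z = (\<lambda>(x,y). cmp x y) ` ((E \<times> Ca) \<inter> composable_pairs r s L)"
  have Zc: "compactin T Z" unfolding Z_def using cmp_image_compact[OF Ec Cac] .
  have Zcl: "closedin T Z" using compactin_imp_closedin[OF HT Zc] .
  define Cb where "Cb = {x \<in> L. (r x, d x) \<in> (s ` K) \<times> D}"
  have Cbc: "compactin T Cb" unfolding Cb_def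
    by (rule rdprop) (use compactin_Times image_compactin[OF UK(2) scont] Dc in blast)
  have CbL: "Cb \<subseteq> L" unfolding Cb_def by blast
  define h where "h = (\<lambda>b. cmp (g (r b)) b)"
  define F where "F = {b \<in> Cb. h b \<in> Z}"
  have FL: "F \<subseteq> L" unfolding F_def Cb_def by blast
  have grb: "g (r b) \<in> L \<and> s (g (r b)) = r b" if bCb: "b \<in> Cb" for b
  proof -
    obtain x where x: "x \<in> K" "r b = s x" using bCb unfolding Cb_def by auto
    then have "x \<in> U0" using KU0 by blast
    then show ?thesis using gs U0L x by auto
  qed
  have hcont: "continuous_map (subtopology T Cb) T h"
  proof -
    have c1: "continuous_map (subtopology T Cb) (subtopology TV (s ` U0)) r"
      unfolding continuous_map_in_subtopology
    proof
      show "continuous_map (subtopology T Cb) TV r" using continuous_map_from_subtopology[OF rcont] .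
      show "r \<in> topspace (subtopology T Cb) \<rightarrow> s ` U0" using KU0 unfolding Cb_def by auto
    qed
    have c2: "continuous_map (subtopology T Cb) T (\<lambda>b. g (r b))"
      using continuous_map_compose[OF c1 gcont] continuous_map_in_subtopology
      unfolding o_def by blast
    have c3: "continuous_map (subtopology T Cb) (prod_topology T T) (\<lambda>b. (g (r b), b))"
      using c2 continuous_map_from_subtopology[OF continuous_map_id] unfolding id_def
      by (intro continuous_map_pairedI) auto
    have c4: "continuous_map (subtopology T Cb) (subtopology (prod_topology T T) (composable_pairs r s L)) (\<lambda>b. (g (r b), b))"
      unfolding continuous_map_in_subtopology
    proof
      show "continuous_map (subtopology T Cb) (prod_topology T T) (\<lambda>b. (g (r b), b))" using c3 .
      show "(\<lambda>b. (g (r b), b)) \<in> topspace (subtopology T Cb) \<rightarrow> composable_pairs r s L"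
        using grb CbL unfolding composable_pairs_def by auto
    qed
    show ?thesis using continuous_map_compose[OF c4 cmpcont] unfolding h_def o_def by simp
  qed
  have Fc: "compactin T F"
  proof -
    have "closedin (subtopology T Cb) {b \<in> topspace (subtopology T Cb). h b \<in> Z}"
      using closedin_continuous_map_preimage[OF hcont Zcl] .
    moreover have "{b \<in> topspace (subtopology T Cb). h b \<in> Z} = F" unfolding F_def using CbL by auto
    ultimately have "compactin (subtopology T Cb) F"
      using closedin_compact_space compact_space_subtopology[OF Cbc] by metis
    then show ?thesis using compactin_subtopology by blast
  qed
  have claim: "\<exists>b\<in>F. r b = r eta \<and> (\<exists>w. common_upper_bound L r s cmp eta b w)"
    if g': "g' \<in> K" and eta: "eta \<in> L" and ge: "s g' = r eta" for g' eta
  proof -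
    have g'L: "g' \<in> L" using g' KL by blast
    have "r (cmp g' eta) = r g'" using cmpr[OF g'L eta ge] .
    also have "r g' \<in> UE" using g' UK G_def by blast
    finally have "r (cmp g' eta) \<in> r ` E" using UE by blast
    then obtain mu zz where mu: "mu \<in> E" "common_upper_bound L r s cmp (cmp g' eta) mu zz"
      using Eex cmpL[OF g'L eta ge] unfolding exhaustive_def by blast
    have muL: "mu \<in> L" using mu EL by blast
    obtain b a w where ba: "b \<in> L" "a \<in> L" "s g' = r b" "s mu = r a" "cmp g' b = cmp mu a"
      "d b = - d g' + lubP P (d g') (d mu)" "d a = - d mu + lubP P (d g') (d mu)"
      "common_upper_bound L r s cmp eta b w"
      using core[OF g'L eta muL ge mu(2)] by blast
    have dg': "d g' = d gam" using g' UK G_def by blast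
    have "d b \<in> D" unfolding D_def using ba(6) dg' mu(1) dP[OF ba(1)] by auto
    moreover have "r b \<in> s ` K" using ba(3) g' by (metis image_eqI)
    ultimately have bCb: "b \<in> Cb" unfolding Cb_def using ba(1) by auto
    have "d a \<in> Da" unfolding Da_def using ba(7) dg' mu(1) dP[OF ba(2)] by auto
    moreover have "r a \<in> s ` E" using ba(4) mu(1) by (metis image_eqI)
    ultimately have aCa: "a \<in> Ca" unfolding Ca_def using ba(2) by auto
    have "g' \<in> U0" using g' KU0 by blast
    then have "h b = cmp g' b" unfolding h_def using ba(3) gs by metis
    also have "\<dots> = cmp mu a" using ba(5) .
    finally have "h b \<in> Z" unfolding Z_def composable_pairs_def using mu(1) aCa muL ba(2,4)
      by (auto intro!: image_eqI[of _ _ "(mu, a)"])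
    then have "b \<in> F" unfolding F_def using bCb by blast
    moreover have "r b = r eta" using ba(3) ge by simp
    ultimately show ?thesis using ba(8) by blast
  qed
  have Fex: "exhaustive L r s cmp F"
    unfolding exhaustive_def
  proof (intro conjI ballI impI)
    show "F \<subseteq> L" using FL .
    fix eta assume eta: "eta \<in> L" "r eta \<in> r ` F"
    then obtain b0 where "b0 \<in> F" "r eta = r b0" by blast
    then obtain g' where g': "g' \<in> K" "r eta = s g'" unfolding F_def Cb_def by auto
    obtain b w where "b \<in> F" "common_upper_bound L r s cmp eta b w"
      using claim[OF g'(1) eta(1) g'(2)[symmetric]] by blast
    then show "\<exists>mu\<in>F. \<exists>z. common_upper_bound L r s cmp eta mu z" by blast
  qed
  have nb: "s ` U1 \<subseteq> r ` F"
  proof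
    fix v assume "v \<in> s ` U1"
    then obtain g' where g': "g' \<in> U1" "v = s g'" by blast
    have vV: "v \<in> V" using g' sV UK KL by blast
    then have vL: "v \<in> L" and rv: "r v = v" using V_sub vert by auto
    have "g' \<in> K" using g' UK by blast
    then obtain b where "b \<in> F" "r b = r v" using claim[OF _ vL] g'(2) rv by metis
    then show "v \<in> r ` F" using rv by (metis image_eqI)
  qed
  have szeta: "s zeta = s gam" using gam cmps[OF lamL gam(1) gam(2)] by simp
  have "s zeta \<in> s ` U1" using szeta UK(3) by (metis image_eqI)
  then have "\<exists>U. openin TV U \<and> s zeta \<in> U \<and> U \<subseteq> r ` F" using sU1 nb by blast
  then have "\<exists>b\<in>F. s zeta = r b \<and> cmp zeta b \<in> A"
    using ext Fc Fex unfolding extendable_def by simp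
  then obtain b where b: "b \<in> F" "s zeta = r b" "cmp zeta b \<in> A" by blast
  have bL: "b \<in> L" using b FL by blast
  have "h b = cmp gam b" unfolding h_def using b(2) szeta gs[OF U0(2)] by simp
  moreover have "h b \<in> Z" using b F_def by blast
  ultimately obtain mu a where ma: "mu \<in> E" "a \<in> Ca" "(mu, a) \<in> composable_pairs r s L" "cmp gam b = cmp mu a"
    unfolding Z_def by auto
  have muL: "mu \<in> L" "a \<in> L" "s mu = r a" using ma unfolding composable_pairs_def by auto
  have gb: "s gam = r b" using b(2) szeta by simp
  have "r mu = s lam" using cmpr[OF muL(1,2,3)] ma(4) cmpr[OF gam(1) bL gb] gam(2) by simp
  then have lm: "s lam = r mu" by simp
  have "cmp zeta b = cmp lam (cmp gam b)" using gam assoc[OF lamL gam(1) bL gam(2) gb] by simp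
  also have "\<dots> = cmp (cmp lam mu) a" using ma(4) assoc[OF lamL muL(1,2) lm muL(3)] by simp
  finally have "path_le L r s cmp (cmp lam mu) (cmp zeta b)"
    using ple_cmp[OF cmpL[OF lamL muL(1) lm] muL(2)] cmps[OF lamL muL(1) lm] muL(3) by simp
  then have "cmp lam mu \<in> A" using path_her[OF A b(3)] by blast
  then show "\<exists>mu\<in>E. s lam = r mu \<and> cmp lam mu \<in> A" using ma(1) lm by blast
qed

lemma partc:
  assumes B: "B \<in> boundary_path_space T TV r s cmp" and rho: "rho \<in> L"
    and srho: "s rho = range_vertex V r B"
  shows "prefix_path L r s cmp rho B \<in> boundary_path_space T TV r s cmp"
proof -
  have BP: "B \<in> path_space T r s cmp" using B unfolding boundary_path_space_def by blast
  have BL: "B \<subseteq> L" using path_sub[OF BP] .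
  obtain nu0 where nu0: "nu0 \<in> B" using BP unfolding path_space_def by auto
  have rB: "r nu = r nu0" if nuB: "nu \<in> B" for nu
  proof -
    obtain z where "common_upper_bound L r s cmp nu nu0 z" using path_dir[OF BP nuB nu0] by blast
    then show ?thesis using ple_r unfolding common_upper_bound_def by metis
  qed
  have "range_vertex V r B = r nu0" unfolding range_vertex_def
  proof (rule the_equality)
    have "r nu0 \<in> V" using rV BL nu0 by blast
    then show "r nu0 \<in> V \<and> (\<forall>lam\<in>B. r lam = r nu0)" using rB by blast
    show "\<And>x. x \<in> V \<and> (\<forall>lam\<in>B. r lam = x) \<Longrightarrow> x = r nu0" using nu0 by auto
  qed
  then have sr: "s rho = r nu" if "nu \<in> B" for nu using srho rB that by simp
  let ?R = "prefix_path L r s cmp rho B"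
  have memR: "lam \<in> ?R \<longleftrightarrow> (\<exists>nu\<in>B. path_le L r s cmp lam (cmp rho nu))" for lam
    unfolding prefix_path_def by simp
  have rnL: "cmp rho nu \<in> L" if "nu \<in> B" for nu using cmpL[OF rho _ sr[OF that]] BL that by blast
  have rnR: "cmp rho nu \<in> ?R" if "nu \<in> B" for nu using memR ple_refl[OF rnL[OF that]] that by blast
  have RP: "?R \<in> path_space T r s cmp"
  proof (rule pathI)
    show "?R \<noteq> {}" using rnR nu0 by blast
    show "?R \<subseteq> L" using memR unfolding path_le_def by blast
  next
    fix lam mu assume "lam \<in> ?R" "path_le L r s cmp mu lam"
    then obtain nu where "nu \<in> B" "path_le L r s cmp lam (cmp rho nu)" "path_le L r s cmp mu lam" using memR by blast
    then show "mu \<in> ?R" using memR ple_trans[of mu lam "cmp rho nu"] by blast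
  next
    fix x y assume "x \<in> ?R" "y \<in> ?R"
    then obtain n1 n2 where n: "n1 \<in> B" "n2 \<in> B" "path_le L r s cmp x (cmp rho n1)" "path_le L r s cmp y (cmp rho n2)"
      using memR by blast
    obtain nu where nu: "nu \<in> B" "common_upper_bound L r s cmp n1 n2 nu" using path_dir[OF BP n(1,2)] by blast
    have step: "path_le L r s cmp (cmp rho n) (cmp rho nu)" if nB: "n \<in> B" and nle: "path_le L r s cmp n nu" for n
    proof -
      obtain a where a: "a \<in> L" "s n = r a" "nu = cmp n a" using nle unfolding path_le_def by blast
      have "cmp rho nu = cmp (cmp rho n) a" using assoc[OF rho _ a(1) sr[OF nB] a(2)] BL nB a(3) by auto
      moreover have "s (cmp rho n) = r a" using cmps[OF rho _ sr[OF nB]] BL nB a(2) by auto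
      ultimately show ?thesis using ple_cmp[OF rnL[OF nB] a(1)] by simp
    qed
    have "path_le L r s cmp n1 nu" "path_le L r s cmp n2 nu" using nu unfolding common_upper_bound_def by auto
    then have "path_le L r s cmp x (cmp rho nu)" "path_le L r s cmp y (cmp rho nu)"
      using ple_trans[OF n(3) step[OF n(1)]] ple_trans[OF n(4) step[OF n(2)]] by auto
    then show "\<exists>z\<in>?R. common_upper_bound L r s cmp x y z"
      unfolding common_upper_bound_def using rnR nu by blast
  qed
  have extn: "extendable T TV r s cmp ?R (cmp rho nu)" if nu: "nu \<in> B" for nu
  proof -
    have ext: "extendable T TV r s cmp B nu" using B nu unfolding boundary_path_space_def by blast
    have sl: "s (cmp rho nu) = s nu" using cmps[OF rho _ sr[OF nu]] BL nu by blast
    show ?thesis unfolding extendable_def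
    proof (intro conjI allI impI)
      show "cmp rho nu \<in> ?R" using rnR nu .
      fix E assume E: "compactin T E \<and> exhaustive L r s cmp E \<and> (\<exists>U. openin TV U \<and> s (cmp rho nu) \<in> U \<and> U \<subseteq> r ` E)"
      then have "\<exists>mu\<in>E. s nu = r mu \<and> cmp nu mu \<in> B"
        using ext sl unfolding extendable_def by simp
      then obtain mu where mu: "mu \<in> E" "s nu = r mu" "cmp nu mu \<in> B" by blast
      have muL: "mu \<in> L" using E mu unfolding exhaustive_def by blast
      have nuL: "nu \<in> L" using BL nu by blast
      have "cmp (cmp rho nu) mu = cmp rho (cmp nu mu)" using assoc[OF rho nuL muL sr[OF nu] mu(2)] .
      then have "cmp (cmp rho nu) mu \<in> ?R" using rnR mu by simp
      then show "\<exists>mu\<in>E. s (cmp rho nu) = r mu \<and> cmp (cmp rho nu) mu \<in> ?R" using mu sl by auto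
    qed
  qed
  have "extendable T TV r s cmp ?R lam" if lamR: "lam \<in> ?R" for lam
  proof -
    obtain nu where nu: "nu \<in> B" "path_le L r s cmp lam (cmp rho nu)" using lamR memR by blast
    then show ?thesis using prefix_ext[OF RP rnR[OF nu(1)] extn[OF nu(1)] nu(2)] by simp
  qed
  then show ?thesis using RP unfolding boundary_path_space_def by blast
qed

end

theorem proposition6p16:
  fixes P :: "'q::group_add set"
    and T TV :: "'a topology"
    and r s :: "'a \<Rightarrow> 'a"
    and cmp :: "'a \<Rightarrow> 'a \<Rightarrow> 'a"
    and d :: "'a \<Rightarrow> 'q"
  assumes "quasi_lattice_ordered P"
    and "top_P_graph P T TV r s cmp d"
    and "rd_proper P T TV r d"
  shows "closedin (path_space_topology T r s cmp) (boundary_path_space T TV r s cmp) \<and>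
    (\<forall>A n. A \<in> boundary_path_space T TV r s cmp \<longrightarrow> n \<in> P \<longrightarrow>
            shift_path (topspace T) r s cmp d A n \<noteq> {} \<longrightarrow>
            shift_path (topspace T) r s cmp d A n \<in> boundary_path_space T TV r s cmp) \<and>
    (\<forall>B rho. B \<in> boundary_path_space T TV r s cmp \<longrightarrow> rho \<in> topspace T \<longrightarrow>
            s rho = range_vertex (topspace TV) r B \<longrightarrow>
            prefix_path (topspace T) r s cmp rho B \<in> boundary_path_space T TV r s cmp)"
proof -
  interpret PG P T TV r s cmp d using assms by unfold_locales
  show ?thesis
  proof (intro conjI allI impI)
    show "closedin (path_space_topology T r s cmp) (boundary_path_space T TV r s cmp)" by (rule parta)
  next
    fix A n assume "A \<in> boundary_path_space T TV r s cmp" "n \<in> P" "shift_path (topspace T) r s cmp d A n \<noteq> {}"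
    then show "shift_path (topspace T) r s cmp d A n \<in> boundary_path_space T TV r s cmp" by (rule partb)
  next
    fix B rho assume "B \<in> boundary_path_space T TV r s cmp" "rho \<in> topspace T" "s rho = range_vertex (topspace TV) r B"
    then show "prefix_path (topspace T) r s cmp rho B \<in> boundary_path_space T TV r s cmp" by (rule partc)
  qed
qed

end
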